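(* Consider the continuous-time Markov process on $\mathbb N_0=\{0,1,2,\dots\}$ with rates $q(0,1)=1$, and for $x\ge1$: $q(x,x+1)=\frac{2x+1}{4x}$, $q(x,x-1)=1-\frac{2x+1}{4x}$, all other rates $0$. Consider the $2$-leg spider walk with local configurations $L(x)=\{(x,x+1),(x,x+2)\}$, $x\in\mathbb N_0$, i.e. the process on $\{(x,x+1),(x,x+2):x\ge0\}$ in which a leg at $y$ jumps to $y\pm1$ at rate $q(y,y\pm1)$ provided the resulting configuration is again of this form (legs distinct, at distance at most $2$, inside $\mathbb N_0$). Then the Markov process is recurrent whereas the spider walk is transient.
   Context: A continuous-time Markov process is called recurrent/transient if its jump chain, with transition probabilities $p(x,y)=q(x,y)/\sum_{z\ne x}q(x,z)$ for $y\ne x$, is recurrent/transient. *)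

theory Defs
  imports "HOL-Analysis.Analysis"
begin

text \<open>A continuous-time Markov process is given by a countable state set S and
jump rates q x y (for x \<noteq> y).\<close>

definition jump_prob :: "'a set \<Rightarrow> ('a \<Rightarrow> 'a \<Rightarrow> real) \<Rightarrow> 'a \<Rightarrow> 'a \<Rightarrow> real" where
  "jump_prob S q x y =
     (if y \<noteq> x \<and> y \<in> S then q x y / (\<Sum>\<^sub>\<infinity>z\<in>S - {x}. q x z) else 0)"

text \<open>First-passage probabilities of the jump chain: first_passage S q n x y is the
probability that the jump chain started at x hits y for the first time (at a
positive time) exactly at step n.\<close>

fun first_passage :: "'a set \<Rightarrow> ('a \<Rightarrow> 'a \<Rightarrow> real) \<Rightarrow> nat \<Rightarrow> 'a \<Rightarrow> 'a \<Rightarrow> real" where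
  "first_passage S q 0 x y = 0"
| "first_passage S q (Suc n) x y =
     (if n = 0 then jump_prob S q x y
      else (\<Sum>\<^sub>\<infinity>z\<in>S - {y}. jump_prob S q x z * first_passage S q n z y))"

definition return_prob :: "'a set \<Rightarrow> ('a \<Rightarrow> 'a \<Rightarrow> real) \<Rightarrow> 'a \<Rightarrow> real" where
  "return_prob S q x = (\<Sum>n. first_passage S q n x x)"

definition recurrent_state :: "'a set \<Rightarrow> ('a \<Rightarrow> 'a \<Rightarrow> real) \<Rightarrow> 'a \<Rightarrow> bool" where
  "recurrent_state S q x \<longleftrightarrow> summable (\<lambda>n. first_passage S q n x x) \<and> return_prob S q x = 1"

definition transient_state :: "'a set \<Rightarrow> ('a \<Rightarrow> 'a \<Rightarrow> real) \<Rightarrow> 'a \<Rightarrow> bool" where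
  "transient_state S q x \<longleftrightarrow> summable (\<lambda>n. first_passage S q n x x) \<and> return_prob S q x < 1"

text \<open>The process is recurrent/transient iff its jump chain is, i.e. iff every state is.\<close>

definition recurrent_process :: "'a set \<Rightarrow> ('a \<Rightarrow> 'a \<Rightarrow> real) \<Rightarrow> bool" where
  "recurrent_process S q \<longleftrightarrow> (\<forall>x\<in>S. recurrent_state S q x)"

definition transient_process :: "'a set \<Rightarrow> ('a \<Rightarrow> 'a \<Rightarrow> real) \<Rightarrow> bool" where
  "transient_process S q \<longleftrightarrow> (\<forall>x\<in>S. transient_state S q x)"

definition qrate :: "nat \<Rightarrow> nat \<Rightarrow> real" where
  "qrate x y =
     (if x = 0 then (if y = 1 then 1 else 0)
      else if y = x + 1 then (2 * real x + 1) / (4 * real x)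
      else if y + 1 = x then 1 - (2 * real x + 1) / (4 * real x)
      else 0)"

text \<open>The 2-leg spider: configurations {x, x+1} and {x, x+2}, written as ordered
pairs (smaller leg, larger leg).\<close>

definition spider_states :: "(nat \<times> nat) set" where
  "spider_states = {(x, x + 1) | x. True} \<union> {(x, x + 2) | x. True}"

definition adjacent :: "nat \<Rightarrow> nat \<Rightarrow> bool" where
  "adjacent y y' \<longleftrightarrow> y' = Suc y \<or> Suc y' = y"

definition spider_rate :: "nat \<times> nat \<Rightarrow> nat \<times> nat \<Rightarrow> real" where
  "spider_rate c c' =
     (if c' \<in> spider_states \<and> snd c' = snd c \<and> adjacent (fst c) (fst c')
        then qrate (fst c) (fst c') else 0)
   + (if c' \<in> spider_states \<and> fst c' = fst c \<and> adjacent (snd c) (snd c')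
        then qrate (snd c) (snd c') else 0)"

end

theory Submission
  imports Defs
begin


definition bdP :: "(nat \<Rightarrow> real) \<Rightarrow> nat \<Rightarrow> nat \<Rightarrow> real" where
  "bdP up a c = (if c = Suc a then up a else if Suc c = a then 1 - up a else 0)"

definition Lsum :: "(nat \<Rightarrow> real) \<Rightarrow> nat \<Rightarrow> (nat \<Rightarrow> real) \<Rightarrow> nat \<Rightarrow> real" where
  "Lsum up b f z = (if Suc z \<noteq> b then up z else 0) * f (Suc z)
     + (if 0 < z \<and> z - 1 \<noteq> b then 1 - up z else 0) * f (z - 1)"

fun fpb :: "(nat \<Rightarrow> real) \<Rightarrow> nat \<Rightarrow> nat \<Rightarrow> nat \<Rightarrow> real" where
  "fpb up 0 a b = 0"
| "fpb up (Suc n) a b = (if n = 0 then bdP up a b else Lsum up b (\<lambda>w. fpb up n w b) a)"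

lemma fpb_1[simp]: "fpb up (Suc 0) a b = bdP up a b" by simp
lemma fpb_SS[simp]: "fpb up (Suc (Suc n)) a b = Lsum up b (\<lambda>w. fpb up (Suc n) w b) a" by simp
declare fpb.simps(2)[simp del]

lemma infsum_nbr:
  fixes X :: "nat \<Rightarrow> real"
  assumes "\<And>c. c \<noteq> Suc a \<Longrightarrow> Suc c \<noteq> a \<Longrightarrow> X c = 0"
  shows "infsum X (UNIV - {b}) = (if Suc a \<noteq> b then X (Suc a) else 0)
     + (if 0 < a \<and> a - 1 \<noteq> b then X (a - 1) else 0)"
proof -
  define F where "F = ({Suc a} \<union> (if 0 < a then {a - 1} else {})) - {b}"
  have "infsum X (UNIV - {b}) = infsum X F"
    by (rule infsum_cong_neutral) (use assms in \<open>auto simp: F_def split: if_splits\<close>)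
  also have "\<dots> = sum X F" by (simp add: F_def)
  also have "\<dots> = (if Suc a \<noteq> b then X (Suc a) else 0)
     + (if 0 < a \<and> a - 1 \<noteq> b then X (a - 1) else 0)"
    by (cases a) (auto simp: F_def insert_Diff_if)
  finally show ?thesis .
qed

lemma transfer:
  assumes bij: "bij_betw enc UNIV S"
    and jp: "\<And>a c. jump_prob S q (enc a) (enc c) = bdP up a c"
  shows "first_passage S q n (enc a) (enc b) = fpb up n a b"
proof (induction n arbitrary: a)
  case 0 then show ?case by simp
next
  case (Suc n)
  show ?case
  proof (cases n)
    case 0 then show ?thesis by (simp add: jp fpb.simps(2))
  next
    case (Suc m)
    have inj: "inj enc" using bij by (simp add: bij_betw_def)
    have S: "S - {enc b} = enc ` (UNIV - {b})"
      using bij by (auto simp: bij_betw_def inj_eq)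
    have "first_passage S q (Suc n) (enc a) (enc b)
        = infsum (\<lambda>z. jump_prob S q (enc a) z * first_passage S q n z (enc b)) (enc ` (UNIV - {b}))"
      using Suc by (simp add: S)
    also have "\<dots> = infsum (\<lambda>c. bdP up a c * fpb up n c b) (UNIV - {b})"
      using inj by (subst infsum_reindex) (auto intro: inj_on_subset simp: o_def jp Suc.IH)
    also have "\<dots> = Lsum up b (\<lambda>w. fpb up n w b) a"
      by (subst infsum_nbr[where a=a]) (auto simp: bdP_def Lsum_def)
    finally show ?thesis using Suc by (simp add: fpb.simps(2))
  qed
qed



definition G :: "(nat \<Rightarrow> real) \<Rightarrow> nat \<Rightarrow> nat \<Rightarrow> nat \<Rightarrow> real" where
  "G up b N z = (\<Sum>n<N. fpb up (Suc n) z b)"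

definition Av :: "(nat \<Rightarrow> real) \<Rightarrow> (nat \<Rightarrow> real) \<Rightarrow> nat \<Rightarrow> real" where
  "Av up f z = up z * f (Suc z) + (if 0 < z then (1 - up z) * f (z - 1) else 0)"

definition rho :: "(nat \<Rightarrow> real) \<Rightarrow> nat \<Rightarrow> real" where
  "rho up i = (1 - up i) / up i"

definition psc :: "(nat \<Rightarrow> real) \<Rightarrow> nat \<Rightarrow> nat \<Rightarrow> real" where
  "psc up y j = (\<Prod>i\<in>{Suc y..y + j}. rho up i)"

locale bd =
  fixes up :: "nat \<Rightarrow> real"
  assumes up0: "up 0 = 1" and upos: "\<And>a. 0 < up a" and uplt: "\<And>a. 0 < a \<Longrightarrow> up a < 1"
begin

lemma up_le1: "up a \<le> 1"
  using up0 uplt[of a] by (cases a) auto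

lemma rho_nonneg: "0 \<le> rho up i"
  using upos[of i] up_le1[of i] by (simp add: rho_def)

lemma psc_nonneg: "0 \<le> psc up y j"
  by (simp add: psc_def prod_nonneg rho_nonneg)

lemma psc_0[simp]: "psc up y 0 = 1" by (simp add: psc_def)

lemma psc_Suc: "psc up y (Suc j) = psc up y j * rho up (y + Suc j)"
  unfolding psc_def by (simp add: prod.nat_ivl_Suc' mult.commute)

lemma bdP_nonneg: "0 \<le> bdP up a c"
  using upos[of a] up_le1[of a] by (simp add: bdP_def)

lemma Lsum_mono:
  assumes "\<And>w. f w \<le> g w" shows "Lsum up b f z \<le> Lsum up b g z"
  unfolding Lsum_def using assms upos[of z] up_le1[of z]
  by (intro add_mono mult_left_mono) auto

lemma Lsum_nonneg:
  assumes "\<And>w. 0 \<le> f w" shows "0 \<le> Lsum up b f z"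
  using Lsum_mono[of "\<lambda>_. 0" f b z] assms by (simp add: Lsum_def)

lemma fpb_nonneg: "0 \<le> fpb up n z b"
  by (induction n arbitrary: z) (auto simp: fpb.simps(2) bdP_nonneg intro!: Lsum_nonneg)

lemma Lsum_sum: "(\<Sum>n\<in>A. Lsum up b (f n) z) = Lsum up b (\<lambda>w. \<Sum>n\<in>A. f n w) z"
  by (simp add: Lsum_def sum.distrib sum_distrib_left)

lemma G_0[simp]: "G up b 0 z = 0" by (simp add: G_def)

lemma G_Suc: "G up b (Suc N) z = bdP up z b + Lsum up b (G up b N) z"
proof -
  have "G up b (Suc N) z = fpb up (Suc 0) z b + (\<Sum>n<N. fpb up (Suc (Suc n)) z b)"
    unfolding G_def by (subst sum.lessThan_Suc_shift) simp
  also have "(\<Sum>n<N. fpb up (Suc (Suc n)) z b) = (\<Sum>n<N. Lsum up b (\<lambda>w. fpb up (Suc n) w b) z)"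
    by simp
  also have "\<dots> = Lsum up b (G up b N) z"
    by (subst Lsum_sum) (rule arg_cong[where f="\<lambda>f. Lsum up b f z"], simp add: fun_eq_iff G_def)
  finally show ?thesis by simp
qed

lemma bdP_Lsum: "bdP up z b + Lsum up b g z = Av up (\<lambda>w. if w = b then 1 else g w) z"
  by (cases z) (auto simp: bdP_def Lsum_def Av_def)

lemma Av_mono:
  assumes "\<And>w. f w \<le> g w" shows "Av up f z \<le> Av up g z"
  using assms upos[of z] up_le1[of z]
  by (auto simp: Av_def intro!: add_mono mult_left_mono)

lemma Av_const: "Av up (\<lambda>_. c) z = c"
  using up0 by (cases z) (auto simp: Av_def algebra_simps)

lemma G_nonneg: "0 \<le> G up b N z"
  by (simp add: G_def sum_nonneg fpb_nonneg)

lemma G_le1: "G up b N z \<le> 1"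
proof (induction N arbitrary: z)
  case 0 then show ?case by simp
next
  case (Suc N)
  have "G up b (Suc N) z = Av up (\<lambda>w. if w = b then 1 else G up b N w) z"
    by (simp add: G_Suc bdP_Lsum)
  also have "\<dots> \<le> Av up (\<lambda>_. 1) z" by (rule Av_mono) (use Suc in auto)
  finally show ?case by (simp add: Av_const)
qed

definition H where "H b z = (\<Sum>n. fpb up (Suc n) z b)"

lemma summable_fpb: "summable (\<lambda>n. fpb up (Suc n) z b)"
  by (rule summableI_nonneg_bounded[where x=1]) (use G_le1 fpb_nonneg in \<open>auto simp: G_def\<close>)

lemma G_lim: "(\<lambda>N. G up b N z) \<longlonglongrightarrow> H b z"
  unfolding G_def H_def using summable_fpb summable_LIMSEQ by blast

lemma H_le1: "H b z \<le> 1"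
  using G_lim by (rule LIMSEQ_le_const2) (use G_le1 in auto)

lemma H_nonneg: "0 \<le> H b z"
  using G_lim by (rule LIMSEQ_le_const) (use G_nonneg in auto)

lemma H_fix: "H b z = bdP up z b + Lsum up b (H b) z"
proof -
  have "(\<lambda>N. G up b (Suc N) z) \<longlonglongrightarrow> H b z" using G_lim by (rule LIMSEQ_Suc)
  moreover have "(\<lambda>N. G up b (Suc N) z) \<longlonglongrightarrow> bdP up z b + Lsum up b (H b) z"
    unfolding G_Suc Lsum_def by (intro tendsto_intros G_lim)
  ultimately show ?thesis by (rule LIMSEQ_unique)
qed

lemma sum_fpb: "summable (\<lambda>n. fpb up n z b) \<and> (\<Sum>n. fpb up n z b) = H b z"
proof -
  have s: "summable (\<lambda>n. fpb up n z b)" using summable_fpb summable_Suc_iff by blast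
  then show ?thesis using suminf_split_head[OF s] by (simp add: H_def)
qed

end


context bd begin

lemma Av_lin: "Av up (\<lambda>w. 1 - f w) z = 1 - Av up f z"
  using up0 by (cases z) (auto simp: Av_def algebra_simps)

lemma Av_cong: "f (Suc z) = g (Suc z) \<Longrightarrow> (0 < z \<Longrightarrow> f (z - 1) = g (z - 1)) \<Longrightarrow> Av up f z = Av up g z"
  by (auto simp: Av_def)

lemma harm_step:
  assumes "u z = Av up u z" "0 < z"
  shows "u (Suc z) - u z = rho up z * (u z - u (z - 1))"
proof -
  have "up z * (u (Suc z) - u z) = (1 - up z) * (u z - u (z - 1))"
    using assms by (simp add: Av_def algebra_simps)
  then show ?thesis using upos[of z] by (simp add: rho_def field_simps)
qed

lemma H_at_b: "H b b = up b * H b (Suc b) + (if 0 < b then 1 - up b else 0) * H b (b - 1)"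
  by (subst H_fix) (auto simp: bdP_def Lsum_def)

lemma recurrent:
  assumes ns: "\<not> summable (psc up b)"
  shows "H b b = 1"
proof -
  define u where "u w = 1 - (if w = b then 1 else H b w)" for w
  have harm: "u z = Av up u z" if "z \<noteq> b" for z
  proof -
    have "u z = 1 - (bdP up z b + Lsum up b (H b) z)" using that H_fix[of b z] by (simp add: u_def)
    also have "\<dots> = Av up u z" unfolding bdP_Lsum u_def Av_lin ..
    finally show ?thesis .
  qed
  have ub: "u b = 0" by (simp add: u_def)
  have u01: "0 \<le> u w" "u w \<le> 1" for w using H_le1[of b w] H_nonneg[of b w] by (auto simp: u_def)
  have d: "u (b + Suc j) - u (b + j) = u (Suc b) * psc up b j" for j
  proof (induction j)
    case 0 then show ?case by (simp add: ub)
  next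
    case (Suc j)
    have "u (Suc (b + Suc j)) - u (b + Suc j) = rho up (b + Suc j) * (u (b + Suc j) - u (b + Suc j - 1))"
      by (rule harm_step) (auto intro: harm)
    also have "\<dots> = u (Suc b) * psc up b (Suc j)" using Suc by (simp add: psc_Suc)
    finally show ?case by simp
  qed
  have s: "u (b + k) = u (Suc b) * (\<Sum>j<k. psc up b j)" for k
  proof (induction k)
    case 0 then show ?case by (simp add: ub)
  next
    case (Suc k) then show ?case using d[of k] by (simp add: algebra_simps)
  qed
  have up1: "u (Suc b) = 0"
  proof (rule ccontr)
    assume "u (Suc b) \<noteq> 0"
    then have pos: "u (Suc b) > 0" using u01[of "Suc b"] by simp
    have "summable (psc up b)"
    proof (rule summableI_nonneg_bounded[where x="1 / u (Suc b)"])
      show "0 \<le> psc up b n" for n by (rule psc_nonneg)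
      show "(\<Sum>j<k. psc up b j) \<le> 1 / u (Suc b)" for k
        using s[of k] u01[of "b + k"] pos by (simp add: field_simps mult.commute)
    qed
    with ns show False by simp
  qed
  have H1: "H b (Suc b) = 1" using up1 by (simp add: u_def)
  have H2: "H b (b - 1) = 1" if "0 < b"
  proof -
    have eq: "u (Suc z) = u z" if "z < b" for z
      using that
    proof (induction z)
      case 0
      have "u 0 = Av up u 0" using 0 by (intro harm) simp
      then show ?case using up0 by (simp add: Av_def)
    next
      case (Suc z)
      have "u (Suc (Suc z)) - u (Suc z) = rho up (Suc z) * (u (Suc z) - u (Suc z - 1))"
        using Suc by (intro harm_step harm) auto
      then show ?case using Suc by simp
    qed
    have "u z = u 0" if "z \<le> b" for z using that
      by (induction z) (use eq in auto)
    then have "u (b - 1) = u 0" "u b = u 0" using diff_le_self order_refl by blast+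
    then have "u (b - 1) = u b" by (simp only:)
    moreover have "b - 1 \<noteq> b" using that by simp
    ultimately show ?thesis using ub by (simp add: u_def)
  qed
  show ?thesis using H1 H2 H_at_b[of b] up0 by (cases "b = 0") auto
qed

lemma transient:
  assumes sm: "summable (psc up b)"
  shows "H b b < 1"
proof -
  define S where "S = suminf (psc up b)"
  define s where "s k = (\<Sum>j<k. psc up b j)" for k
  have sS: "s k \<le> S" for k unfolding s_def S_def
    by (rule sum_le_suminf[OF sm]) (auto simp: psc_nonneg)
  have s0: "0 \<le> s k" for k unfolding s_def by (simp add: sum_nonneg psc_nonneg)
  have S1: "1 \<le> S" using sS[of 1] by (simp add: s_def)
  define g where "g w = (if w < b then 1 else 1 - s (w - b) / S)" for w
  have g1: "g w \<le> 1" for w using s0[of "w - b"] S1 by (simp add: g_def)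
  have gb: "g b = 1" by (simp add: g_def s_def)
  have Avg: "Av up g z \<le> g z" for z
  proof (cases "z < b")
    case True
    have "Av up g z = Av up (\<lambda>_. 1) z"
      by (rule Av_cong) (use True gb in \<open>auto simp: g_def\<close>)
    then show ?thesis using True by (simp add: Av_const g_def)
  next
    case False
    show ?thesis
    proof (cases "z = b")
      case True
      have "Av up g z \<le> Av up (\<lambda>_. 1) z" by (rule Av_mono) (rule g1)
      then show ?thesis using True gb by (simp add: Av_const)
    next
      case False2: False
      from False False2 have "b < z" by simp
      then obtain k where k: "z = b + Suc k" by (auto simp: less_iff_Suc_add)
      have rec: "psc up b (Suc k) * up z = (1 - up z) * psc up b k"
        using upos[of z] k by (simp add: psc_Suc rho_def)
      have "up z * s (Suc (Suc k)) + (1 - up z) * s k = s (Suc k)"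
        using rec by (simp add: s_def algebra_simps)
      moreover have "g (Suc z) = 1 - s (Suc (Suc k)) / S" "g (z - 1) = 1 - s k / S" "g z = 1 - s (Suc k) / S"
        using k by (auto simp: g_def Suc_diff_le)
      ultimately have "Av up g z = up z * (1 - s (Suc (Suc k)) / S) + (1 - up z) * (1 - s k / S)"
        using k by (simp add: Av_def)
      also have "\<dots> = 1 - (up z * s (Suc (Suc k)) + (1 - up z) * s k) / S"
        using S1 by (simp add: field_simps)
      also have "\<dots> = g z" using \<open>up z * s (Suc (Suc k)) + (1 - up z) * s k = s (Suc k)\<close> \<open>g z = 1 - s (Suc k) / S\<close> by simp
      finally have "Av up g z = g z" .
      then show ?thesis by simp
    qed
  qed
  have Gg: "G up b N z \<le> g z" for N z
  proof (induction N arbitrary: z)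
    case 0 then show ?case using s0 sS S1 by (simp add: g_def field_simps)
  next
    case (Suc N)
    have "G up b (Suc N) z = Av up (\<lambda>w. if w = b then 1 else G up b N w) z"
      by (simp add: G_Suc bdP_Lsum)
    also have "\<dots> \<le> Av up g z" by (rule Av_mono) (use Suc gb in auto)
    also have "\<dots> \<le> g z" by (rule Avg)
    finally show ?case .
  qed
  have "H b (Suc b) \<le> g (Suc b)" using G_lim by (rule LIMSEQ_le_const2) (use Gg in auto)
  also have "g (Suc b) = 1 - 1 / S" by (simp add: g_def s_def)
  finally have h0: "H b (Suc b) \<le> 1 - 1 / S" .
  have "0 < 1 / S" using S1 by simp
  then have h1: "H b (Suc b) < 1" using h0 by linarith
  show ?thesis
  proof (cases "b = 0")
    case True then show ?thesis using H_at_b[of b] h1 up0 by simp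
  next
    case False
    have "H b b \<le> up b * H b (Suc b) + (1 - up b) * 1"
      using H_at_b[of b] False H_le1[of b "b-1"] up_le1[of b]
      by (simp add: mult_left_le)
    also have "\<dots> < up b * 1 + (1 - up b)"
      using h1 upos[of b] by simp
    finally show ?thesis by simp
  qed
qed

end


lemma rec_from_bd:
  assumes "bd up" "bij_betw enc UNIV S" "\<And>a c. jump_prob S q (enc a) (enc c) = bdP up a c"
    "\<And>y. \<not> summable (psc up y)"
  shows "recurrent_process S q"
  unfolding recurrent_process_def
proof
  fix x assume "x \<in> S"
  then obtain a where x: "x = enc a" using assms(2) by (auto simp: bij_betw_def)
  have fp: "first_passage S q n x x = fpb up n a a" for n
    unfolding x by (rule transfer[OF assms(2,3)])
  show "recurrent_state S q x"
    unfolding recurrent_state_def return_prob_def fp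
    using bd.sum_fpb[OF assms(1)] bd.recurrent[OF assms(1) assms(4)] by simp
qed

lemma trans_from_bd:
  assumes "bd up" "bij_betw enc UNIV S" "\<And>a c. jump_prob S q (enc a) (enc c) = bdP up a c"
    "\<And>y. summable (psc up y)"
  shows "transient_process S q"
  unfolding transient_process_def
proof
  fix x assume "x \<in> S"
  then obtain a where x: "x = enc a" using assms(2) by (auto simp: bij_betw_def)
  have fp: "first_passage S q n x x = fpb up n a a" for n
    unfolding x by (rule transfer[OF assms(2,3)])
  show "transient_state S q x"
    unfolding transient_state_def return_prob_def fp
    using bd.sum_fpb[OF assms(1)] bd.transient[OF assms(1) assms(4)] by simp
qed

definition upN :: "nat \<Rightarrow> real" where "upN x = qrate x (Suc x)"

lemma upN_pos: "0 < a \<Longrightarrow> upN a = (2 * real a + 1) / (4 * real a)"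
  by (simp add: upN_def qrate_def)

lemma bd_upN: "bd upN"
proof
  show "upN 0 = 1" by (simp add: upN_def qrate_def)
  show "0 < upN a" for a by (cases "a = 0") (auto simp: upN_def qrate_def)
  show "upN a < 1" if "0 < a" for a using that by (simp add: upN_pos field_simps)
qed

lemma qrate_down: "0 < a \<Longrightarrow> qrate a (a - 1) = 1 - upN a"
  by (auto simp: qrate_def upN_def)

lemma jp_N: "jump_prob UNIV qrate a c = bdP upN a c"
proof -
  have "infsum (qrate a) (UNIV - {a}) = qrate a (Suc a) + (if 0 < a then qrate a (a - 1) else 0)"
    by (subst infsum_nbr[where a=a]) (auto simp: qrate_def)
  then have tot: "infsum (qrate a) (UNIV - {a}) = 1"
    using qrate_down[of a] by (cases "a = 0") (simp_all add: upN_def[symmetric] bd.up0[OF bd_upN])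
  show ?thesis
  proof (cases "c = Suc a")
    case True then show ?thesis by (simp add: jump_prob_def tot bdP_def upN_def)
  next
    case F1: False
    show ?thesis
    proof (cases "Suc c = a")
      case True then show ?thesis using qrate_down[of a] F1 by (auto simp: jump_prob_def tot bdP_def)
    next
      case False then show ?thesis using F1 by (auto simp: jump_prob_def tot bdP_def qrate_def)
    qed
  qed
qed

lemma rho_N: "0 < i \<Longrightarrow> rho upN i = (2 * real i - 1) / (2 * real i + 1)"
proof -
  assume "0 < i"
  then have i: "0 < real i" by simp
  have "rho upN i = (1 - (2 * real i + 1) / (4 * real i)) / ((2 * real i + 1) / (4 * real i))"
    by (simp add: rho_def upN_pos[OF \<open>0 < i\<close>])
  also have "\<dots> = (2 * real i - 1) / (2 * real i + 1)"
    using i by (simp add: divide_simps)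
  finally show ?thesis .
qed

lemma psc_N: "psc upN y j = (2 * real y + 1) / (2 * real y + 2 * real j + 1)"
proof (induction j)
  case 0 then show ?case by (simp add: bd.psc_0[OF bd_upN])
next
  case (Suc j)
  have r: "rho upN (y + Suc j) = (2 * real (y + Suc j) - 1) / (2 * real (y + Suc j) + 1)"
    by (rule rho_N) simp
  have e: "2 * real (y + Suc j) - 1 = 2 * real y + 2 * real j + 1" by simp
  have p: "0 < 2 * real y + 2 * real j + 1" by simp
  have q: "2 * real (y + Suc j) + 1 = 2 * real y + 2 * real (Suc j) + 1" by simp
  have g: "\<And>a D E::real. D \<noteq> 0 \<Longrightarrow> a / D * (D / E) = a / E" by simp
  show ?case unfolding bd.psc_Suc[OF bd_upN] Suc r e q using p by (intro g) simp
qed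

lemma nonsum_N: "\<not> summable (psc upN y)"
proof
  assume "summable (psc upN y)"
  then have "summable (\<lambda>j. 2 * psc upN y j)" by (rule summable_mult)
  then have "summable (\<lambda>j. inverse (real (Suc j)))"
  proof (rule summable_comparison_test[rotated])
    show "\<exists>N. \<forall>n\<ge>N. norm (inverse (real (Suc n))) \<le> 2 * psc upN y n"
      by (intro exI[of _ 0] allI impI) (simp add: psc_N field_simps)
  qed
  then have "summable (\<lambda>j. inverse (real j))" using summable_Suc_iff by blast
  then show False using not_summable_harmonic by blast
qed

lemma recN: "recurrent_process (UNIV :: nat set) qrate"
  by (rule rec_from_bd[OF bd_upN, of id]) (auto simp: jp_N nonsum_N)



definition enc :: "nat \<Rightarrow> nat \<times> nat" where "enc c = (c div 2, (c + 3) div 2)"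

definition ru :: "nat \<Rightarrow> real" where
  "ru a = (if even a then qrate (a div 2 + 1) (a div 2 + 2) else qrate (a div 2) (a div 2 + 1))"
definition rd :: "nat \<Rightarrow> real" where
  "rd a = (if even a then qrate (a div 2) (a div 2 - 1) else qrate (a div 2 + 2) (a div 2 + 1))"

lemma enc_even: "enc (2 * x) = (x, x + 1)" by (simp add: enc_def)
lemma enc_odd: "enc (2 * x + 1) = (x, x + 2)" by (simp add: enc_def)
lemma enc_odd': "enc (Suc (2 * x)) = (x, x + 2)" by (simp add: enc_def)

lemma bij_enc: "bij_betw enc UNIV spider_states"
proof -
  have "inj enc"
  proof
    fix a c assume "enc a = enc c"
    then show "a = c" by (simp add: enc_def) presburger
  qed
  moreover have "range enc = spider_states"
  proof
    show "range enc \<subseteq> spider_states"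
    proof
      fix p assume "p \<in> range enc"
      then obtain c where c: "p = enc c" by auto
      show "p \<in> spider_states"
      proof (cases "even c")
        case True then obtain x where "c = 2 * x" by auto
        then show ?thesis using c by (auto simp: enc_even spider_states_def)
      next
        case False then obtain x where "c = 2 * x + 1" using oddE by blast
        then have "p = (x, x + 2)" using c enc_odd[of x] by simp
        then show ?thesis by (auto simp: spider_states_def)
      qed
    qed
    show "spider_states \<subseteq> range enc"
      unfolding spider_states_def
    proof
      fix p :: "nat \<times> nat" assume "p \<in> {(x, x + 1) |x. True} \<union> {(x, x + 2) |x. True}"
      then obtain x where "p = enc (2 * x) \<or> p = enc (2 * x + 1)" by (auto simp: enc_even enc_odd')
      then show "p \<in> range enc" by auto
    qed
  qed
  ultimately show ?thesis by (simp add: bij_betw_def)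
qed

lemma enc_in: "enc c \<in> spider_states"
  using bij_enc by (auto simp: bij_betw_def)

lemma enc_e: "enc (2 * x) = (x, Suc x)" by (simp add: enc_def)
lemma enc_o: "enc (Suc (2 * x)) = (x, Suc (Suc x))" by (simp add: enc_def)
lemma in_ss1: "(x, Suc x) \<in> spider_states" by (auto simp: spider_states_def)
lemma in_ss2: "(x, Suc (Suc x)) \<in> spider_states" by (auto simp: spider_states_def)

lemma qrate_diag: "qrate x x = 0" by (simp add: qrate_def)

lemma par0: obtains k where "a = 2 * k" | k where "a = Suc (2 * k)"
  by (metis oddE evenE Suc_eq_plus1)

lemma rate_enc: "spider_rate (enc a) (enc c) = (if c = Suc a then ru a else if Suc c = a then rd a else 0)"
proof (cases a rule: par0)
  case (1 x)
  then show ?thesis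
  proof (cases c rule: par0)
    case (1 y)
    have p: "Suc (2 * y) \<noteq> 2 * x" "2 * y \<noteq> Suc (2 * x)" by presburger+
    have q: "\<not> (y = x \<and> (y = Suc x \<or> Suc y = x))" by auto
    show ?thesis unfolding \<open>a = 2 * x\<close> \<open>c = 2 * y\<close>
      using p by (simp add: spider_rate_def enc_e in_ss1 adjacent_def qrate_diag)
  next
    case (2 y)
    have e: "(Suc (Suc (2 * y)) = 2 * x) = (x = Suc y)" by presburger
    show ?thesis unfolding \<open>a = 2 * x\<close> \<open>c = Suc (2 * y)\<close>
      by (auto simp: e spider_rate_def enc_e enc_o in_ss1 in_ss2 adjacent_def ru_def rd_def)
  qed
next
  case (2 x)
  then show ?thesis
  proof (cases c rule: par0)
    case (1 y)
    have e: "(2 * y = Suc (Suc (2 * x))) = (y = Suc x)" by presburger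
    show ?thesis unfolding \<open>a = Suc (2 * x)\<close> \<open>c = 2 * y\<close>
      by (auto simp: e spider_rate_def spider_rate_def enc_e enc_o in_ss1 in_ss2 adjacent_def ru_def rd_def)
  next
    case (2 y)
    have p: "Suc (2 * y) \<noteq> 2 * x" "2 * y \<noteq> Suc (2 * x)" by presburger+
    show ?thesis unfolding \<open>a = Suc (2 * x)\<close> \<open>c = Suc (2 * y)\<close>
      using p by (simp add: spider_rate_def enc_o in_ss2 adjacent_def qrate_diag)
  qed
qed



lemma qrate_up: "qrate x (Suc x) = upN x" by (simp add: upN_def)
lemma upN_gt0: "0 < upN x" using bd.upos[OF bd_upN] .
lemma downN_gt0: "0 < x \<Longrightarrow> 0 < 1 - upN x" using bd.uplt[OF bd_upN, of x] by simp

lemma par: obtains k where "a = 2 * k" | k where "a = Suc (2 * k)"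
  by (metis oddE evenE Suc_eq_plus1)

lemma ru_eq: "ru a = (if even a then upN (a div 2 + 1) else upN (a div 2))"
  using qrate_up[of "a div 2 + 1"] qrate_up[of "a div 2"] by (simp add: ru_def)

lemma ru_pos: "0 < ru a" by (simp add: ru_eq upN_gt0)

lemma rd_eq: "0 < a \<Longrightarrow> rd a = (if even a then 1 - upN (a div 2) else 1 - upN (a div 2 + 2))"
  using qrate_down[of "a div 2"] qrate_down[of "a div 2 + 2"] by (cases a rule: par) (auto simp: rd_def)

lemma rd_pos: "0 < a \<Longrightarrow> 0 < rd a"
  by (cases a rule: par) (auto simp: rd_eq bd.uplt[OF bd_upN])



definition upS :: "nat \<Rightarrow> real" where "upS a = ru a / (ru a + (if 0 < a then rd a else 0))"

lemma bd_upS: "bd upS"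
proof
  show "upS 0 = 1" using ru_pos[of 0] by (simp add: upS_def)
  show "0 < upS a" for a using ru_pos[of a] rd_pos[of a] by (cases "a = 0") (auto simp: upS_def)
  show "upS a < 1" if "0 < a" for a using ru_pos[of a] rd_pos[OF that] that by (simp add: upS_def)
qed

lemma jp_S: "jump_prob spider_states spider_rate (enc a) (enc c) = bdP upS a c"
proof -
  have inj: "inj enc" using bij_enc by (simp add: bij_betw_def)
  have S: "spider_states - {enc a} = enc ` (UNIV - {a})"
    using bij_enc by (auto simp: bij_betw_def inj_eq)
  have "infsum (spider_rate (enc a)) (spider_states - {enc a})
      = infsum (\<lambda>c. spider_rate (enc a) (enc c)) (UNIV - {a})"
    unfolding S using inj by (subst infsum_reindex) (auto intro: inj_on_subset simp: o_def)
  also have "\<dots> = ru a + (if 0 < a then rd a else 0)"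
    by (subst infsum_nbr[where a=a]) (auto simp: rate_enc)
  finally have tot: "infsum (spider_rate (enc a)) (spider_states - {enc a}) = ru a + (if 0 < a then rd a else 0)" .
  have ne: "enc c \<noteq> enc a \<longleftrightarrow> c \<noteq> a" using inj by (auto simp: inj_eq)
  show ?thesis
  proof (cases "c = Suc a")
    case True then show ?thesis using ne ru_pos[of a] rd_pos[of a]
      by (auto simp: jump_prob_def tot bdP_def enc_in rate_enc upS_def)
  next
    case F1: False
    show ?thesis
    proof (cases "Suc c = a")
      case True
      have "rd a / (ru a + rd a) = 1 - ru a / (ru a + rd a)"
        using ru_pos[of a] rd_pos[of a] True by (simp add: field_simps)
      then show ?thesis using True F1 ne by (auto simp: jump_prob_def tot bdP_def enc_in rate_enc upS_def)
    next
      case False then show ?thesis using F1 ne by (auto simp: jump_prob_def tot bdP_def enc_in rate_enc)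
    qed
  qed
qed

lemma rho_S: "0 < i \<Longrightarrow> rho upS i = rd i / ru i"
  using ru_pos[of i] rd_pos[of i] by (simp add: rho_def upS_def divide_simps)

lemma rho1: "rho upS 1 = 3 / 8"
  by (simp add: rho_S rd_eq ru_eq upN_pos bd.up0[OF bd_upN])

lemma rho_even: "rho upS (2 * n + 2) = (2 * real n + 1) * (real n + 2) / ((real n + 1) * (2 * real n + 5))"
proof -
  have "rho upS (2 * n + 2) = (1 - upN (n + 1)) / upN (n + 2)"
    by (simp add: rho_S rd_eq ru_eq)
  also have "\<dots> = (1 - (2 * real n + 3) / (4 * real n + 4)) / ((2 * real n + 5) / (4 * real n + 8))"
    by (simp add: upN_pos algebra_simps)
  also have "\<dots> = (2 * real n + 1) * (real n + 2) / ((real n + 1) * (2 * real n + 5))"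
    by (simp add: divide_simps) (simp add: algebra_simps)
  finally show ?thesis .
qed

lemma rho_odd: "rho upS (2 * n + 3) = (2 * real n + 5) * (real n + 1) / ((real n + 3) * (2 * real n + 3))"
proof -
  have e: "2 * n + 3 = Suc (2 * (n + 1))" by simp
  have "rho upS (2 * n + 3) = (1 - upN (n + 3)) / upN (n + 1)"
    unfolding e by (simp add: rho_S rd_eq ru_eq numeral_3_eq_3)
  also have "\<dots> = (1 - (2 * real n + 7) / (4 * real n + 12)) / ((2 * real n + 3) / (4 * real n + 4))"
    by (simp add: upN_pos algebra_simps)
  also have "\<dots> = (2 * real n + 5) * (real n + 1) / ((real n + 3) * (2 * real n + 3))"
    by (simp add: divide_simps) (simp add: algebra_simps)
  finally show ?thesis .
qed



lemma Pi_Suc: "psc upS 0 (Suc k) = psc upS 0 k * rho upS (Suc k)"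
  using bd.psc_Suc[OF bd_upS, of 0 k] by simp

lemma Pi_closed: "psc upS 0 (2 * n + 1) = 3 / (4 * (2 * real n + 1) * (real n + 2))
   \<and> psc upS 0 (2 * n + 2) = 3 / (4 * (real n + 1) * (2 * real n + 5))"
proof (induction n)
  case 0
  have r2: "rho upS 2 = 2 / 5" using rho_even[of 0] by (simp add: numeral_2_eq_2)
  have "psc upS 0 1 = 3 / 8" using Pi_Suc[of 0] rho1 by (simp add: bd.psc_0[OF bd_upS])
  moreover have "psc upS 0 2 = 3 / 20"
  proof -
    have "psc upS 0 2 = psc upS 0 1 * rho upS 2" using Pi_Suc[of 1] by (simp add: numeral_2_eq_2)
    then show ?thesis using \<open>psc upS 0 1 = 3 / 8\<close> r2 by simp
  qed
  ultimately show ?case by (simp add: numeral_2_eq_2)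
next
  case (Suc n)
  have a: "psc upS 0 (2 * Suc n + 1) = psc upS 0 (2 * n + 2) * rho upS (2 * n + 3)"
    using Pi_Suc[of "2 * n + 2"] by (simp add: numeral_3_eq_3)
  have b: "psc upS 0 (2 * Suc n + 2) = psc upS 0 (2 * Suc n + 1) * rho upS (2 * Suc n + 2)"
    using Pi_Suc[of "2 * Suc n + 1"] by simp
  have c1: "psc upS 0 (2 * Suc n + 1) = 3 / (4 * (2 * real (Suc n) + 1) * (real (Suc n) + 2))"
    unfolding a rho_odd[of n] Suc.IH[THEN conjunct2] by (simp add: divide_simps) (simp add: algebra_simps)
  moreover have "psc upS 0 (2 * Suc n + 2) = 3 / (4 * (real (Suc n) + 1) * (2 * real (Suc n) + 5))"
    unfolding b c1 rho_even[of "Suc n"] by (simp add: divide_simps) (simp add: algebra_simps)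
  ultimately show ?case by blast
qed

lemma Pi_bound: "psc upS 0 (Suc k) \<le> 3 / (real k + 1)^2"
proof (cases k rule: par)
  case (1 n)
  have "psc upS 0 (Suc k) = 3 / (4 * (2 * real n + 1) * (real n + 2))" using Pi_closed[of n] 1 by simp
  also have "\<dots> \<le> 3 / (real k + 1)^2"
  proof (rule frac_le)
    show "(real k + 1)^2 \<le> 4 * (2 * real n + 1) * (real n + 2)" using 1 by (simp add: power2_eq_square algebra_simps)
  qed simp_all
  finally show ?thesis .
next
  case (2 n)
  have "psc upS 0 (Suc k) = 3 / (4 * (real n + 1) * (2 * real n + 5))"
    using Pi_closed[of n] 2 by (simp add: numeral_2_eq_2)
  also have "\<dots> \<le> 3 / (real k + 1)^2"
  proof (rule frac_le)
    show "(real k + 1)^2 \<le> 4 * (real n + 1) * (2 * real n + 5)" using 2 by (simp add: power2_eq_square algebra_simps)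
  qed simp_all
  finally show ?thesis .
qed

lemma summable_Pi: "summable (psc upS 0)"
proof -
  have "summable (\<lambda>n. 1 / (real n + 1)^2)" using inverse_squares_sums by (simp add: sums_iff add.commute)
  then have "summable (\<lambda>n. 3 * (1 / (real n + 1)^2))" by (rule summable_mult)
  then have "summable (\<lambda>k. psc upS 0 (Suc k))"
    by (rule summable_comparison_test[rotated])
       (use Pi_bound bd.psc_nonneg[OF bd_upS] in auto)
  then show ?thesis using summable_Suc_iff by blast
qed

lemma rho_S_pos: "0 < i \<Longrightarrow> 0 < rho upS i"
  using ru_pos[of i] rd_pos[of i] by (simp add: rho_S)

lemma psc_split: "psc upS 0 (y + j) = psc upS 0 y * psc upS y j"
proof (induction j)
  case 0 then show ?case by (simp add: bd.psc_0[OF bd_upS])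
next
  case (Suc j)
  show ?case using Pi_Suc[of "y + j"] bd.psc_Suc[OF bd_upS, of y j] Suc by simp
qed

lemma psc0_pos: "0 < psc upS 0 y"
  unfolding psc_def by (rule prod_pos) (auto intro: rho_S_pos)

lemma summable_S: "summable (psc upS y)"
proof -
  have "summable (\<lambda>j. psc upS 0 (j + y))" using summable_Pi by simp
  then have "summable (\<lambda>j. psc upS 0 (j + y) / psc upS 0 y)" by (rule summable_divide)
  moreover have "psc upS 0 (j + y) / psc upS 0 y = psc upS y j" for j
    using psc_split[of y j] psc0_pos[of y] by (simp add: add.commute)
  ultimately show ?thesis by simp
qed

lemma transS: "transient_process spider_states spider_rate"
  by (rule trans_from_bd[OF bd_upS bij_enc jp_S summable_S])

theorem mainTheorem7:
  shows "recurrent_process (UNIV :: nat set) qrate \<and> transient_process spider_states spider_rate"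
  using recN transS by blast

end
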